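(* Let $W$ be a nonnegative random variable and $\sigma=(\sigma_n)_{n\ge 0}$ a sequence of positive integers. Then $W$ is $\sigma$-summable if and only if both (i) $\sum_n\big(\Pr\{W>1\}\big)^{\sigma_n}<\infty$, and (ii) $\sum_n\int_0^1\big(\Pr\{W>t\}\big)^{\sigma_n}\,dt<\infty$.
   Context: With $(W_n^j)_{n,j}$ independent copies of $W$ and $\Lambda_n=\min_{1\le j\le\sigma_n}W_n^j$, $W$ is called $\sigma$-summable if $\Pr\{\sum_n\Lambda_n<\infty\}>0$. *)

theory Defs
  imports "HOL-Probability.Probability"
begin

text \<open>Canonical probability space carrying a doubly indexed family
  of independent copies (W_n^j) of W: the infinite product of the law of W,
  indexed by pairs (n, j).\<close>
definition copies_space :: "'a measure \<Rightarrow> ('a \<Rightarrow> real) \<Rightarrow> (nat \<times> nat \<Rightarrow> real) measure" where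
  "copies_space M W = PiM UNIV (\<lambda>_::nat \<times> nat. distr M borel W)"

definition Lambda :: "(nat \<Rightarrow> nat) \<Rightarrow> (nat \<times> nat \<Rightarrow> real) \<Rightarrow> nat \<Rightarrow> real" where
  "Lambda \<sigma> \<omega> n = Min ((\<lambda>j. \<omega> (n, j)) ` {1..\<sigma> n})"

definition sigma_summable :: "'a measure \<Rightarrow> ('a \<Rightarrow> real) \<Rightarrow> (nat \<Rightarrow> nat) \<Rightarrow> bool" where
  "sigma_summable M W \<sigma> \<longleftrightarrow>
     measure (copies_space M W)
       {\<omega> \<in> space (copies_space M W). summable (\<lambda>n. Lambda \<sigma> \<omega> n)} > 0"

end

theory Submission
  imports Defs
begin

lemma Lambda_meas:
  assumes "sets D = borel"
  shows "(\<lambda>\<omega>. Lambda \<sigma> \<omega> n) \<in> borel_measurable (PiM UNIV (\<lambda>_::nat\<times>nat. D))"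
proof -
  have "(\<lambda>\<omega>. \<omega> (n,j)) \<in> measurable (PiM UNIV (\<lambda>_::nat\<times>nat. D)) D" for j
    by (rule measurable_component_singleton) simp
  then have "(\<lambda>\<omega>. \<omega> (n,j)) \<in> borel_measurable (PiM UNIV (\<lambda>_::nat\<times>nat. D))" for j
    by (subst measurable_cong_sets[OF refl assms[symmetric]])
  then show ?thesis unfolding Lambda_def
    by (intro borel_measurable_Min) auto
qed


lemma coord_indep:
  assumes "prob_space D"
  shows "prob_space.indep_vars (PiM UNIV (\<lambda>_::nat\<times>nat. D)) (\<lambda>_. D) (\<lambda>i \<omega>. \<omega> i) UNIV"
proof -
  interpret PS: product_prob_space "\<lambda>_::nat\<times>nat. D" UNIV
    using prob_space.emeasure_space_1[OF assms(1)] sigma_finite_measure.sigma_finite_countable[OF prob_space_imp_sigma_finite[OF assms(1)]]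
    by unfold_locales auto
  have rv: "(\<lambda>\<omega>. \<omega> i) \<in> measurable (PiM UNIV (\<lambda>_::nat\<times>nat. D)) D" for i
    by (rule measurable_component_singleton) simp
  have e1: "(\<lambda>x. \<lambda>i\<in>UNIV. x i) = (\<lambda>x::nat\<times>nat\<Rightarrow>real. x)"
    by (rule ext) (rule restrict_UNIV)
  have e2: "(\<lambda>i. distr (Pi\<^sub>M UNIV (\<lambda>_::nat\<times>nat. D)) D (\<lambda>\<omega>. \<omega> i)) = (\<lambda>_::nat\<times>nat. D)"
    by (rule ext) (rule PS.PiM_component, simp)
  have "distr (Pi\<^sub>M UNIV (\<lambda>_::nat\<times>nat. D)) (Pi\<^sub>M UNIV (\<lambda>_::nat\<times>nat. D)) (\<lambda>x. \<lambda>i\<in>UNIV. x i) =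
      Pi\<^sub>M UNIV (\<lambda>i. distr (Pi\<^sub>M UNIV (\<lambda>_::nat\<times>nat. D)) D (\<lambda>\<omega>. \<omega> i))"
    by (subst e2, simp only: restrict_UNIV, rule distr_id2, rule refl)
  then show ?thesis
    using PS.indep_vars_iff_distr_eq_PiM[where I=UNIV and M'="\<lambda>_. D" and X="\<lambda>i \<omega>. \<omega> i", OF _ rv] by simp
qed

lemma Lambda_indep:
  assumes "prob_space D" "sets D = borel"
  shows "prob_space.indep_vars (PiM UNIV (\<lambda>_::nat\<times>nat. D)) (\<lambda>_. borel) (\<lambda>n \<omega>. Lambda \<sigma> \<omega> n) UNIV"
proof -
  interpret PS: product_prob_space "\<lambda>_::nat\<times>nat. D" UNIV
    using prob_space.emeasure_space_1[OF assms(1)] sigma_finite_measure.sigma_finite_countable[OF prob_space_imp_sigma_finite[OF assms(1)]]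
    by unfold_locales auto
  define K where "K n = {n} \<times> {1..\<sigma> n}" for n
  have dj: "disjoint_family_on K UNIV"
    unfolding K_def disjoint_family_on_def by blast
  have "PS.indep_vars (\<lambda>n. PiM (K n) (\<lambda>_. D)) (\<lambda>n \<omega>. restrict (\<lambda>i. \<omega> i) (K n)) UNIV"
    by (rule PS.indep_vars_restrict[OF coord_indep[OF assms(1)] _ dj]) simp
  then have "PS.indep_vars (\<lambda>_. borel) (\<lambda>n \<omega>. Min ((\<lambda>j. restrict (\<lambda>i. \<omega> i) (K n) (n,j)) ` {1..\<sigma> n})) UNIV"
  proof (rule PS.indep_vars_compose2[where Y="\<lambda>n f. Min ((\<lambda>j. f (n,j)) ` {1..\<sigma> n})"])
    fix n
    have "(\<lambda>f. f (n,j)) \<in> measurable (PiM (K n) (\<lambda>_. D)) D" if "j \<in> {1..\<sigma> n}" for j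
      by (rule measurable_component_singleton) (use that in \<open>simp add: K_def\<close>)
    then have "(\<lambda>f. f (n,j)) \<in> borel_measurable (PiM (K n) (\<lambda>_. D))" if "j \<in> {1..\<sigma> n}" for j
      using that by (subst measurable_cong_sets[OF refl assms(2)[symmetric]])
    then show "(\<lambda>f. Min ((\<lambda>j. f (n,j)) ` {1..\<sigma> n})) \<in> borel_measurable (PiM (K n) (\<lambda>_. D))"
      by (intro borel_measurable_Min) auto
  qed
  moreover have "(\<lambda>\<omega>. Min ((\<lambda>j. restrict (\<lambda>i. \<omega> i) (K n) (n,j)) ` {1..\<sigma> n})) = (\<lambda>\<omega>. Lambda \<sigma> \<omega> n)" for n
    unfolding Lambda_def K_def by (intro ext arg_cong[where f=Min] image_cong) auto
  ultimately show ?thesis by simp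
qed


lemma Lambda_prob:
  assumes "prob_space D" "sets D = borel" "0 < \<sigma> n"
  shows "measure (PiM UNIV (\<lambda>_::nat\<times>nat. D)) {\<omega> \<in> space (PiM UNIV (\<lambda>_::nat\<times>nat. D)). t < Lambda \<sigma> \<omega> n}
     = measure D {t<..} ^ \<sigma> n"
proof -
  interpret PS: product_prob_space "\<lambda>_::nat\<times>nat. D" UNIV
    using prob_space.emeasure_space_1[OF assms(1)] sigma_finite_measure.sigma_finite_countable[OF prob_space_imp_sigma_finite[OF assms(1)]]
    by unfold_locales auto
  let ?P = "PiM UNIV (\<lambda>_::nat\<times>nat. D)"
  define J where "J = {n} \<times> {1..\<sigma> n}"
  have J: "J \<noteq> {}" "finite J" "card J = \<sigma> n" using assms(3) by (auto simp: J_def card_cartesian_product)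
  have "{\<omega> \<in> space ?P. t < Lambda \<sigma> \<omega> n} = (\<Inter>i\<in>J. (\<lambda>\<omega>. \<omega> i) -` {t<..} \<inter> space ?P)"
    using assms(3) by (auto simp: Lambda_def J_def)
  then have "measure ?P {\<omega> \<in> space ?P. t < Lambda \<sigma> \<omega> n} = (\<Prod>i\<in>J. measure ?P ((\<lambda>\<omega>. \<omega> i) -` {t<..} \<inter> space ?P))"
    using PS.indep_varsD[OF coord_indep[OF assms(1)] J(1,2)] assms(2) by simp
  also have "\<dots> = (\<Prod>i\<in>J. measure D {t<..})"
  proof (rule prod.cong[OF refl])
    fix i
    have "measure D {t<..} = measure (distr ?P D (\<lambda>\<omega>. \<omega> i)) {t<..}"
      by (subst PS.PiM_component) simp_all
    also have "\<dots> = measure ?P ((\<lambda>\<omega>. \<omega> i) -` {t<..} \<inter> space ?P)"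
      by (rule measure_distr) (auto simp: assms(2) intro: measurable_component_singleton)
    finally show "measure ?P ((\<lambda>\<omega>. \<omega> i) -` {t<..} \<inter> space ?P) = measure D {t<..}" ..
  qed
  also have "\<dots> = measure D {t<..} ^ \<sigma> n" using J by simp
  finally show ?thesis .
qed

lemma layer_one:
  fixes v :: real
  shows "(\<integral>\<^sup>+ t. indicator {t. 0 \<le> t \<and> t \<le> 1 \<and> t < v} t \<partial>lborel) = ennreal (min (max v 0) 1)"
proof (cases "v \<le> 0")
  case True
  then have "{t. 0 \<le> t \<and> t \<le> 1 \<and> t < v} = {}" by auto
  then show ?thesis using True by simp
next
  case False
  show ?thesis
  proof (cases "v \<le> 1")
    case True
    then have "{t. 0 \<le> t \<and> t \<le> 1 \<and> t < v} = {0..<v}" by auto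
    then show ?thesis using True False by simp
  next
    case F2: False
    then have "{t. 0 \<le> t \<and> t \<le> 1 \<and> t < v} = {0..1}" by auto
    then show ?thesis using F2 False by simp
  qed
qed

lemma Lambda_layer:
  assumes "prob_space D" "sets D = borel" "0 < \<sigma> n"
  shows "(\<integral>\<^sup>+ \<omega>. ennreal (min (max (Lambda \<sigma> \<omega> n) 0) 1) \<partial>PiM UNIV (\<lambda>_::nat\<times>nat. D))
     = (\<integral>\<^sup>+ t\<in>{0..1}. ennreal (measure D {t<..} ^ \<sigma> n) \<partial>lborel)"
proof -
  interpret PS: product_prob_space "\<lambda>_::nat\<times>nat. D" UNIV
    using prob_space.emeasure_space_1[OF assms(1)] sigma_finite_measure.sigma_finite_countable[OF prob_space_imp_sigma_finite[OF assms(1)]]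
    by unfold_locales auto
  let ?P = "PiM UNIV (\<lambda>_::nat\<times>nat. D)"
  interpret pair_sigma_finite ?P lborel
    by unfold_locales
  have [measurable]: "(\<lambda>\<omega>. Lambda \<sigma> \<omega> n) \<in> borel_measurable ?P"
    by (rule Lambda_meas[OF assms(2)])
  define f :: "_ \<Rightarrow> real \<Rightarrow> ennreal" where "f \<omega> t = indicator {t. 0 \<le> t \<and> t \<le> 1 \<and> t < Lambda \<sigma> \<omega> n} t" for \<omega> t
  have fm: "case_prod (\<lambda>\<omega> t. (f \<omega> t :: ennreal)) \<in> borel_measurable (?P \<Otimes>\<^sub>M lborel)"
    unfolding f_def by (simp add: indicator_def split_beta') measurable
  have "(\<integral>\<^sup>+ \<omega>. ennreal (min (max (Lambda \<sigma> \<omega> n) 0) 1) \<partial>?P) = (\<integral>\<^sup>+ \<omega>. (\<integral>\<^sup>+ t. f \<omega> t \<partial>lborel) \<partial>?P)"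
    unfolding f_def by (simp add: layer_one)
  also have "\<dots> = (\<integral>\<^sup>+ t. (\<integral>\<^sup>+ \<omega>. f \<omega> t \<partial>?P) \<partial>lborel)"
    by (rule Fubini'[OF fm, symmetric])
  also have "\<dots> = (\<integral>\<^sup>+ t\<in>{0..1}. ennreal (measure D {t<..} ^ \<sigma> n) \<partial>lborel)"
  proof (rule nn_integral_cong)
    fix t :: real
    show "(\<integral>\<^sup>+ \<omega>. f \<omega> t \<partial>?P) = ennreal (measure D {t<..} ^ \<sigma> n) * indicator {0..1} t"
    proof (cases "t \<in> {0..1}")
      case True
      then have "(\<integral>\<^sup>+ \<omega>. f \<omega> t \<partial>?P) = (\<integral>\<^sup>+ \<omega>. indicator {\<omega> \<in> space ?P. t < Lambda \<sigma> \<omega> n} \<omega> \<partial>?P)"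
        unfolding f_def by (intro nn_integral_cong) (auto simp: indicator_def)
      also have "\<dots> = emeasure ?P {\<omega> \<in> space ?P. t < Lambda \<sigma> \<omega> n}"
        by (rule nn_integral_indicator) measurable
      also have "\<dots> = ennreal (measure D {t<..} ^ \<sigma> n)"
        by (simp add: PS.emeasure_eq_measure Lambda_prob[where D=D and \<sigma>=\<sigma> and n=n and t=t, OF assms])
      finally show ?thesis using True by simp
    next
      case False
      then show ?thesis unfolding f_def by (auto simp: indicator_def)
    qed
  qed
  finally show ?thesis .
qed


lemma exp_chord:
  fixes x :: real
  assumes "0 \<le> x" "x \<le> 1"
  shows "exp (-x) \<le> 1 - (1 - exp (-1)) * x"
proof -
  have "exp ((1 - x) *\<^sub>R 0 + x *\<^sub>R (-1)) \<le> (1 - x) * exp 0 + x * exp (-1)"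
    by (rule convex_onD[OF exp_convex]) (use assms in auto)
  then show ?thesis by (simp add: algebra_simps)
qed

theorem proposition4p1:
  fixes M :: "'a measure" and W :: "'a \<Rightarrow> real" and \<sigma> :: "nat \<Rightarrow> nat"
  assumes "prob_space M"
    and "W \<in> borel_measurable M"
    and "\<forall>x\<in>space M. 0 \<le> W x"
    and "\<forall>n. 0 < \<sigma> n"
  shows "sigma_summable M W \<sigma> \<longleftrightarrow>
    summable (\<lambda>n. (measure M {x \<in> space M. W x > 1}) ^ \<sigma> n) \<and>
    (\<Sum>n. \<integral>\<^sup>+ t\<in>{0..1}. ennreal ((measure M {x \<in> space M. W x > t}) ^ \<sigma> n) \<partial>lborel) < \<infinity>"
proof -
  interpret M: prob_space M by fact
  define D where "D = distr M borel W"
  have PD: "prob_space D" unfolding D_def by (rule M.prob_space_distr) (rule assms(2))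
  have SD: "sets D = sets borel" unfolding D_def by simp
  define P where "P = PiM UNIV (\<lambda>_::nat\<times>nat. D)"
  have CS: "copies_space M W = P" unfolding copies_space_def P_def D_def ..
  interpret PS: product_prob_space "\<lambda>_::nat\<times>nat. D" UNIV
    using prob_space.emeasure_space_1[OF PD] sigma_finite_measure.sigma_finite_countable[OF prob_space_imp_sigma_finite[OF PD]]
    by unfold_locales auto
  interpret PP: prob_space P unfolding P_def by (rule prob_space_PiM) (simp add: PD)
  have pD: "measure D {t<..} = measure M {x\<in>space M. W x > t}" for t
  proof -
    have "measure D {t<..} = measure M (W -` {t<..} \<inter> space M)"
      unfolding D_def by (rule measure_distr) (auto simp: assms(2))
    also have "W -` {t<..} \<inter> space M = {x\<in>space M. W x > t}" by auto
    finally show ?thesis .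
  qed
  define a where "a n = (\<integral>\<^sup>+ t\<in>{0..1}. ennreal ((measure M {x \<in> space M. W x > t}) ^ \<sigma> n) \<partial>lborel)" for n
  define X where "X n \<omega> = min (max (Lambda \<sigma> \<omega> n) 0) 1" for n \<omega>
  have Lm[measurable]: "(\<lambda>\<omega>. Lambda \<sigma> \<omega> n) \<in> borel_measurable P" for n
    unfolding P_def by (rule Lambda_meas[OF SD])
  have Xm[measurable]: "X n \<in> borel_measurable P" for n
    unfolding X_def by measurable
  have X01: "0 \<le> X n \<omega>" "X n \<omega> \<le> 1" for n \<omega> unfolding X_def by auto
  have Xint: "(\<integral>\<^sup>+\<omega>. ennreal (X n \<omega>) \<partial>P) = a n" for n
    unfolding X_def P_def a_def using Lambda_layer[OF PD SD, of \<sigma> n] assms(4) by (simp add: pD)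
  have AEnn: "AE \<omega> in P. \<forall>n. 0 \<le> Lambda \<sigma> \<omega> n"
  proof -
    have "AE x in D. 0 \<le> x"
      unfolding D_def using assms(2,3) by (subst AE_distr_iff) auto
    then have "AE \<omega> in P. 0 \<le> \<omega> i" for i
      unfolding P_def by (rule PS.AE_component[of i "\<lambda>x. 0 \<le> x", simplified])
    then have "AE \<omega> in P. \<forall>i. 0 \<le> \<omega> i"
      by (subst AE_all_countable) auto
    then show ?thesis
    proof (rule AE_mp, intro AE_I2 impI allI)
      fix \<omega> :: "nat\<times>nat \<Rightarrow> real" and n assume "\<forall>i. 0 \<le> \<omega> i"
      then show "0 \<le> Lambda \<sigma> \<omega> n" unfolding Lambda_def using assms(4)
        by (subst Min_ge_iff) (auto simp: Suc_le_eq)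
    qed
  qed
  define S where "S = {\<omega>\<in>space P. summable (\<lambda>n. Lambda \<sigma> \<omega> n)}"
  have S_sets: "S \<in> sets P"
  proof -
    have "S = {\<omega>\<in>space P. Cauchy (\<lambda>N. \<Sum>n<N. Lambda \<sigma> \<omega> n)}"
      unfolding S_def summable_iff_convergent Cauchy_convergent_iff ..
    also have "\<dots> \<in> sets P" by measurable
    finally show ?thesis .
  qed
  have SS: "sigma_summable M W \<sigma> \<longleftrightarrow> measure P S > 0"
    unfolding sigma_summable_def CS S_def ..
  have key: "sigma_summable M W \<sigma> \<longleftrightarrow> (\<Sum>n. a n) < \<infinity>"
  proof
    assume fin: "(\<Sum>n. a n) < \<infinity>"
    have int: "(\<integral>\<^sup>+\<omega>. (\<Sum>n. ennreal (X n \<omega>)) \<partial>P) = (\<Sum>n. a n)"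
      by (subst nn_integral_suminf) (auto simp: Xint)
    have "AE \<omega> in P. (\<Sum>n. ennreal (X n \<omega>)) \<noteq> \<infinity>"
      by (rule nn_integral_noteq_infinite) (use int fin in auto)
    then have "AE \<omega> in P. summable (\<lambda>n. Lambda \<sigma> \<omega> n)"
      using AEnn
    proof eventually_elim
      case (elim \<omega>)
      have sX: "summable (\<lambda>n. X n \<omega>)" by (rule summable_suminf_not_top) (use elim X01 in auto)
      then have "(\<lambda>n. X n \<omega>) \<longlonglongrightarrow> 0" by (rule summable_LIMSEQ_zero)
      then have "eventually (\<lambda>n. X n \<omega> < 1) sequentially" by (rule order_tendstoD) simp
      then have "eventually (\<lambda>n. Lambda \<sigma> \<omega> n = X n \<omega>) sequentially"
        by eventually_elim (use elim in \<open>auto simp: X_def\<close>)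
      from summable_cong[OF this] sX show ?case by simp
    qed
    then have "measure P S = 1"
      using PP.prob_Collect_eq_1[of "\<lambda>\<omega>. summable (\<lambda>n. Lambda \<sigma> \<omega> n)"] S_sets unfolding S_def by simp
    then show "sigma_summable M W \<sigma>" using SS by simp
  next
    assume pos: "sigma_summable M W \<sigma>"
    show "(\<Sum>n. a n) < \<infinity>"
    proof (rule ccontr)
      assume inf: "\<not> (\<Sum>n. a n) < \<infinity>"
      define r where "r n = (\<integral>\<omega>. X n \<omega> \<partial>P)" for n
      have Xi: "integrable P (X n)" for n
        by (rule PP.integrable_const_bound[where B=1]) (auto simp: X01 abs_le_iff intro: order_trans[OF _ X01(2)])
      have ar: "a n = ennreal (r n)" for n
        unfolding r_def Xint[symmetric] by (rule nn_integral_eq_integral[OF Xi]) (simp add: X01)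
      have r0: "0 \<le> r n" for n unfolding r_def using X01 by simp
      have nsum: "\<not> summable r"
      proof
        assume "summable r"
        then have "(\<Sum>n. ennreal (r n)) \<noteq> top" using r0 by (rule ennreal_suminf_neq_top)
        then show False using inf by (simp add: ar top.not_eq_extremum)
      qed
      have big: "\<exists>N. B < (\<Sum>n<N. r n)" for B
      proof (rule ccontr)
        assume "\<nexists>N. B < (\<Sum>n<N. r n)"
        then have "summable r" by (intro summableI_nonneg_bounded[where x=B]) (auto simp: r0 not_less)
        with nsum show False ..
      qed
      define c where "c = 1 - exp (-1::real)"
      have c: "0 < c" unfolding c_def by simp
      define e where "e n = (\<integral>\<omega>. exp (- X n \<omega>) \<partial>P)" for n
      have ei: "integrable P (\<lambda>\<omega>. exp (- X n \<omega>))" for n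
        by (rule PP.integrable_const_bound[where B=1]) (auto simp: X01)
      have e_le: "e n \<le> exp (- c * r n)" for n
      proof -
        have "e n \<le> (\<integral>\<omega>. 1 - c * X n \<omega> \<partial>P)"
          unfolding e_def using Xi[of n] by (intro integral_mono ei) (auto simp: c_def exp_chord X01)
        also have "\<dots> = 1 - c * r n" unfolding r_def using Xi by (simp add: PP.prob_space)
        also have "\<dots> \<le> exp (- c * r n)" using exp_ge_add_one_self[of "- c * r n"] by simp
        finally show ?thesis .
      qed
      have e0: "0 \<le> e n" for n unfolding e_def by simp
      define F where "F N \<omega> = ennreal (\<Prod>n<N. exp (- X n \<omega>))" for N \<omega>
      have Fm[measurable]: "F N \<in> borel_measurable P" for N unfolding F_def by measurable
      have indepE: "PP.indep_vars (\<lambda>_. borel) (\<lambda>n \<omega>. ennreal (exp (- X n \<omega>))) UNIV"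
      proof -
        have "PP.indep_vars (\<lambda>_. borel) (\<lambda>n \<omega>. (\<lambda>v. ennreal (exp (- min (max v 0) 1))) (Lambda \<sigma> \<omega> n)) UNIV"
          by (rule PP.indep_vars_compose2[OF Lambda_indep[OF PD SD, folded P_def]]) measurable
        then show ?thesis unfolding X_def .
      qed
      have intF: "(\<integral>\<^sup>+\<omega>. F N \<omega> \<partial>P) \<le> ennreal (exp (- c * (\<Sum>n<N. r n)))" for N
      proof -
        have "(\<integral>\<^sup>+\<omega>. F N \<omega> \<partial>P) = (\<Prod>n<N. \<integral>\<^sup>+\<omega>. ennreal (exp (- X n \<omega>)) \<partial>P)"
          unfolding F_def using PP.indep_vars_nn_integral[of "{..<N}" "\<lambda>n \<omega>. ennreal (exp (- X n \<omega>))"] PP.indep_vars_subset[OF indepE, of "{..<N}"] by (simp add: prod_ennreal)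
        also have "\<dots> = (\<Prod>n<N. ennreal (e n))"
          unfolding e_def by (intro prod.cong refl nn_integral_eq_integral ei) auto
        also have "\<dots> = ennreal (\<Prod>n<N. e n)" by (rule prod_ennreal) (simp add: e0)
        also have "\<dots> \<le> ennreal (\<Prod>n<N. exp (- c * r n))"
          using e_le by (intro ennreal_leI prod_mono) (auto simp: e0)
        also have "(\<Prod>n<N. exp (- c * r n)) = exp (- c * (\<Sum>n<N. r n))"
          by (simp add: exp_sum[symmetric] sum_negf sum_distrib_left)
        finally show ?thesis .
      qed
      have dec: "decseq F"
      proof (rule decseq_SucI)
        fix N show "F (Suc N) \<le> F N"
          unfolding le_fun_def F_def
          by (auto intro!: ennreal_leI mult_left_le prod_nonneg simp: X01)
      qed
      have "(\<integral>\<^sup>+\<omega>. (INF N. F N \<omega>) \<partial>P) = (INF N. \<integral>\<^sup>+\<omega>. F N \<omega> \<partial>P)"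
        by (rule nn_integral_monotone_convergence_INF_decseq[OF dec Fm])
           (rule le_less_trans[OF intF], simp)
      also have "\<dots> = 0"
      proof (rule antisym[OF _ zero_le])
        show "(INF N. \<integral>\<^sup>+\<omega>. F N \<omega> \<partial>P) \<le> 0"
        proof (rule ennreal_le_epsilon)
          fix \<epsilon> :: real assume "0 < \<epsilon>"
          obtain N where N: "- ln \<epsilon> / c < (\<Sum>n<N. r n)" using big by blast
          then have "- ln \<epsilon> < c * (\<Sum>n<N. r n)" using c by (simp add: field_simps)
          then have "exp (- c * (\<Sum>n<N. r n)) < exp (ln \<epsilon>)" by simp
          then have "exp (- c * (\<Sum>n<N. r n)) < \<epsilon>" using \<open>0 < \<epsilon>\<close> by simp
          then have "(INF N. \<integral>\<^sup>+\<omega>. F N \<omega> \<partial>P) \<le> ennreal \<epsilon>"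
            using intF[of N] by (intro INF_lower2[of N]) (auto elim!: order_trans intro!: ennreal_leI)
          then show "(INF N. \<integral>\<^sup>+\<omega>. F N \<omega> \<partial>P) \<le> 0 + ennreal \<epsilon>" by simp
        qed
      qed
      finally have I0: "(\<integral>\<^sup>+\<omega>. (INF N. F N \<omega>) \<partial>P) = 0" .
      have "(\<lambda>\<omega>. INF N. F N \<omega>) \<in> borel_measurable P" by measurable
      then have "AE \<omega> in P. (INF N. F N \<omega>) = 0"
        using nn_integral_0_iff_AE I0 by blast
      then have "AE \<omega> in P. \<omega> \<notin> S" using AEnn
      proof eventually_elim
        case (elim \<omega>)
        show "\<omega> \<notin> S"
        proof
          assume "\<omega> \<in> S"
          then have sL: "summable (\<lambda>n. Lambda \<sigma> \<omega> n)" unfolding S_def by auto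
          have sX: "summable (\<lambda>n. X n \<omega>)"
            by (rule summable_comparison_test'[OF sL]) (use elim in \<open>auto simp: X_def\<close>)
          define s where "s = (\<Sum>n. X n \<omega>)"
          have "ennreal (exp (- s)) \<le> F N \<omega>" for N
          proof -
            have "(\<Sum>n<N. X n \<omega>) \<le> s" unfolding s_def by (rule sum_le_suminf) (auto simp: X01 sX)
            then show ?thesis unfolding F_def by (auto simp: exp_sum[symmetric] sum_negf intro!: ennreal_leI)
          qed
          then have "ennreal (exp (- s)) \<le> (INF N. F N \<omega>)" by (rule INF_greatest)
          then show False using elim by simp
        qed
      qed
      then have "measure P S = 0"
        using PP.prob_Collect_eq_0[of "\<lambda>\<omega>. summable (\<lambda>n. Lambda \<sigma> \<omega> n)"] S_sets unfolding S_def by simp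
      then show False using pos SS by simp
    qed
  qed
  have imp: "(\<Sum>n. a n) < \<infinity> \<Longrightarrow> summable (\<lambda>n. (measure M {x \<in> space M. W x > 1}) ^ \<sigma> n)"
  proof -
    assume fin: "(\<Sum>n. a n) < \<infinity>"
    let ?p = "measure M {x \<in> space M. W x > 1}"
    have le: "ennreal (?p ^ \<sigma> n) \<le> a n" for n
    proof -
      have "ennreal (?p ^ \<sigma> n) = (\<integral>\<^sup>+ (t::real)\<in>{0..1}. ennreal (?p ^ \<sigma> n) \<partial>lborel)"
        using emeasure_lborel_Icc[of "0::real" 1] by (subst nn_integral_cmult_indicator) auto
      also have "\<dots> \<le> a n" unfolding a_def
      proof (intro nn_integral_mono)
        fix t :: real
        have sm: "{x \<in> space M. t < W x} \<in> sets M" using assms(2) by measurable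
        show "ennreal (?p ^ \<sigma> n) * indicator {0..1} t \<le> ennreal (measure M {x \<in> space M. W x > t} ^ \<sigma> n) * indicator {0..1} t"
        proof (cases "t \<in> {0..1}")
          case True
          then have "{x \<in> space M. 1 < W x} \<subseteq> {x \<in> space M. t < W x}" by auto
          then have "?p \<le> measure M {x \<in> space M. W x > t}" using sm by (intro M.finite_measure_mono) auto
          then show ?thesis using True by (auto intro!: ennreal_leI power_mono)
        qed simp
      qed
      finally show ?thesis .
    qed
    have "(\<Sum>n. ennreal (?p ^ \<sigma> n)) \<le> (\<Sum>n. a n)" by (intro suminf_le le) auto
    then have "(\<Sum>n. ennreal (?p ^ \<sigma> n)) \<noteq> top" using fin by (auto simp: top_unique)
    then show ?thesis by (intro summable_suminf_not_top) auto
  qed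
  show ?thesis using key imp unfolding a_def by blast
qed

end
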